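(* Let $G=(X,\Sigma,\longrightarrow,X_0)$ and $R=(Z,\Sigma,\longrightarrow,Z_0)$ be automata and $S=(Y,\Sigma,\longrightarrow,Y_0)\in\mathit{SPR}(G,R)$. Then $S\|G\sqsubseteq\mathcal{A}(E)\|G$ for some $\Sigma_{ucr}$-controllability set $E$ from $G$ to $R$. In particular, for any cc-simulation $\Phi$ from $S\|G$ to $R$, $S\|G\sqsubseteq\mathcal{A}(E(\Phi))\|G$, where $E(\Phi)=\{\theta_y:y\in Y\}$ and $\theta_y=\{(x,z):((y,x),z)\in\Phi\text{ and }(y,x)\text{ is reachable in }S\|G\}$.
   Context: An automaton is a 4-tuple $A=(Q,\Sigma,\longrightarrow,Q_0)$ with state set $Q$, finite event set $\Sigma$, ${\longrightarrow}\subseteq Q\times\Sigma\times Q$ and $\emptyset\neq Q_0\subseteq Q$. Write $q\xrightarrow{\sigma}q'$ for $(q,\sigma,q')\in{\longrightarrow}$, $q\xrightarrow{\sigma}$ if some such $q'$ exists; extend to strings. A state is reachable if reached from an initial state by some string. Events are partitioned into uncontrollable $\Sigma_{uc}$ and controllable $\Sigma_c$; $\Sigma_r\subseteq\Sigma$ is a fixed set of required events. $S\|G=(Y\times X,\Sigma,\longrightarrow,Y_0\times X_0)$ with $(y,x)\xrightarrow{\sigma}(y',x')$ iff $y\xrightarrow{\sigma}y'$ and $x\xrightarrow{\sigma}x'$ (similarly for any automaton in place of $S$). $S$ is $\Sigma_{uc}$-admissible w.r.t. $G$ if for every reachable $(y,x)$ of $S\|G$ and $\sigma\in\Sigma_{uc}$,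 $x\xrightarrow{\sigma}$ implies $(y,x)\xrightarrow{\sigma}$. For automata $A_1,A_2$ (state sets $Q_1,Q_2$, initial sets $Q_{01},Q_{02}$), $\Phi\subseteq Q_1\times Q_2$ is a simulation if (initial state) every $q_0\in Q_{01}$ has $p_0\in Q_{02}$ with $(q_0,p_0)\in\Phi$ and (forward) for $(q,p)\in\Phi$, $\sigma\in\Sigma$, $q\xrightarrow{\sigma}q'$ there is $p'$ with $p\xrightarrow{\sigma}p'$, $(q',p')\in\Phi$; a cc-simulation if moreover ($\Sigma_r$-backward) for $(q,p)\in\Phi$, $\sigma\in\Sigma_r$, $p\xrightarrow{\sigma}p'$ there is $q'$ with $q\xrightarrow{\sigma}q'$, $(q',p')\in\Phi$. $A_1\sqsubseteq A_2$, $A_1\sqsubseteq_{cc}A_2$ mean such relations exist. $\mathit{SPR}(G,R)$ is the set of $\Sigma_{uc}$-admissible supervisors $S$ with $S\|G\sqsubseteq_{cc}R$. For $W,W'\subseteq X\times Z$: $\mathit{match}_{G,R}(W,\sigma,W')$ iff for all $(x,z)\in W$ and $x\xrightarrow{\sigma}x'$ there is $z'$ with $z\xrightarrow{\sigma}z'$ and $(x',z')\in W'$. $E\subseteq\wp(X\times Z)$ is a $\Sigma_{ucr}$-controllability set from $G$ to $R$ if: (istate) some $W_0\in E$ satisfies $\forall x_0\in X_0\,\exists z_0\in Z_0\,((x_0,z_0)\in W_0)$; (a) for every $W\in E$, $\sigma\in\Sigma_{uc}$ there is $W'\in E$ with $\mathit{match}_{G,R}(W,\sigma,W')$; (b) for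 every $W\in E$, $(x,z)\in W$, $\sigma\in\Sigma_r$, $z\xrightarrow{\sigma}z'$, there exist $x'$, $W'\in E$ with $x\xrightarrow{\sigma}x'$, $(x',z')\in W'$, $\mathit{match}_{G,R}(W,\sigma,W')$. For any $E\subseteq\wp(X\times Z)$, $E^*=\bigcup_{\widetilde W\in E}\wp(\widetilde W)$, $\mathrm{Succ}_\sigma(W)=\bigcup_{(x,z)\in W}\{x':x\xrightarrow{\sigma}x'\}\times\{z':z\xrightarrow{\sigma}z'\}$, and $\mathcal{A}(E)=(E^*,\Sigma,\longrightarrow,I_E)$ with $I_E=\{W_0\in E^*:\forall x_0\in X_0\,\exists z_0\in Z_0\,((x_0,z_0)\in W_0)\text{ and }W_0\subseteq X_0\times Z_0\}$ and $W\xrightarrow{\sigma}W'$ iff (i) there exist $(x,z)\in W$, $(x',z')\in W'$ with $x\xrightarrow{\sigma}x'$, $z\xrightarrow{\sigma}z'$; (ii) $\mathit{match}_{G,R}(W,\sigma,W')$; (iii) $W'\subseteq\mathrm{Succ}_\sigma(W)$. *)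

theory Defs
  imports Main
begin

text \<open>An automaton over the event type 'e (the finite event set Sigma is the whole
  finite type 'e) and state type 'q (the state set Q is the whole type 'q).\<close>
record ('q, 'e) aut =
  trans :: "('q \<times> 'e \<times> 'q) set"
  init  :: "'q set"

definition is_aut :: "('q, 'e) aut \<Rightarrow> bool" where
  "is_aut A \<longleftrightarrow> init A \<noteq> {}"

definition step_rel :: "('q, 'e) aut \<Rightarrow> ('q \<times> 'q) set" where
  "step_rel A = {(q, q'). \<exists>\<sigma>. (q, \<sigma>, q') \<in> trans A}"

definition reach :: "('q, 'e) aut \<Rightarrow> 'q set" where
  "reach A = {q. \<exists>q0 \<in> init A. (q0, q) \<in> (step_rel A)\<^sup>*}"

definition sync :: "('y, 'e) aut \<Rightarrow> ('x, 'e) aut \<Rightarrow> ('y \<times> 'x, 'e) aut" where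
  "sync S G = \<lparr> trans = {((y, x), \<sigma>, (y', x')). (y, \<sigma>, y') \<in> trans S \<and> (x, \<sigma>, x') \<in> trans G},
                 init = init S \<times> init G \<rparr>"

definition admissible :: "'e set \<Rightarrow> ('y, 'e) aut \<Rightarrow> ('x, 'e) aut \<Rightarrow> bool" where
  "admissible Euc S G \<longleftrightarrow>
     (\<forall>y x. (y, x) \<in> reach (sync S G) \<longrightarrow> (\<forall>\<sigma> \<in> Euc.
        (\<exists>x'. (x, \<sigma>, x') \<in> trans G) \<longrightarrow> (\<exists>q'. ((y, x), \<sigma>, q') \<in> trans (sync S G))))"

definition is_sim :: "('p, 'e) aut \<Rightarrow> ('q, 'e) aut \<Rightarrow> ('p \<times> 'q) set \<Rightarrow> bool" where
  "is_sim A1 A2 \<Phi> \<longleftrightarrow>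
     (\<forall>q0 \<in> init A1. \<exists>p0 \<in> init A2. (q0, p0) \<in> \<Phi>) \<and>
     (\<forall>q p \<sigma> q'. (q, p) \<in> \<Phi> \<and> (q, \<sigma>, q') \<in> trans A1 \<longrightarrow>
        (\<exists>p'. (p, \<sigma>, p') \<in> trans A2 \<and> (q', p') \<in> \<Phi>))"

definition is_ccsim :: "'e set \<Rightarrow> ('p, 'e) aut \<Rightarrow> ('q, 'e) aut \<Rightarrow> ('p \<times> 'q) set \<Rightarrow> bool" where
  "is_ccsim Sr A1 A2 \<Phi> \<longleftrightarrow> is_sim A1 A2 \<Phi> \<and>
     (\<forall>q p \<sigma> p'. (q, p) \<in> \<Phi> \<and> \<sigma> \<in> Sr \<and> (p, \<sigma>, p') \<in> trans A2 \<longrightarrow>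
        (\<exists>q'. (q, \<sigma>, q') \<in> trans A1 \<and> (q', p') \<in> \<Phi>))"

definition sim :: "('p, 'e) aut \<Rightarrow> ('q, 'e) aut \<Rightarrow> bool" where
  "sim A1 A2 \<longleftrightarrow> (\<exists>\<Phi>. is_sim A1 A2 \<Phi>)"

definition ccsim :: "'e set \<Rightarrow> ('p, 'e) aut \<Rightarrow> ('q, 'e) aut \<Rightarrow> bool" where
  "ccsim Sr A1 A2 \<longleftrightarrow> (\<exists>\<Phi>. is_ccsim Sr A1 A2 \<Phi>)"

definition SPR :: "'e set \<Rightarrow> 'e set \<Rightarrow> ('x, 'e) aut \<Rightarrow> ('z, 'e) aut \<Rightarrow> ('y, 'e) aut set" where
  "SPR Euc Sr G R = {S. is_aut S \<and> admissible Euc S G \<and> ccsim Sr (sync S G) R}"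

definition match :: "('x, 'e) aut \<Rightarrow> ('z, 'e) aut \<Rightarrow> ('x \<times> 'z) set \<Rightarrow> 'e \<Rightarrow> ('x \<times> 'z) set \<Rightarrow> bool" where
  "match G R W \<sigma> W' \<longleftrightarrow>
     (\<forall>x z x'. (x, z) \<in> W \<and> (x, \<sigma>, x') \<in> trans G \<longrightarrow>
        (\<exists>z'. (z, \<sigma>, z') \<in> trans R \<and> (x', z') \<in> W'))"

definition ctrl_set :: "'e set \<Rightarrow> 'e set \<Rightarrow> ('x, 'e) aut \<Rightarrow> ('z, 'e) aut \<Rightarrow> ('x \<times> 'z) set set \<Rightarrow> bool" where
  "ctrl_set Euc Sr G R E \<longleftrightarrow>
     (\<exists>W0 \<in> E. \<forall>x0 \<in> init G. \<exists>z0 \<in> init R. (x0, z0) \<in> W0) \<and>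
     (\<forall>W \<in> E. \<forall>\<sigma> \<in> Euc. \<exists>W' \<in> E. match G R W \<sigma> W') \<and>
     (\<forall>W \<in> E. \<forall>x z \<sigma> z'. (x, z) \<in> W \<and> \<sigma> \<in> Sr \<and> (z, \<sigma>, z') \<in> trans R \<longrightarrow>
        (\<exists>x' W'. (x, \<sigma>, x') \<in> trans G \<and> W' \<in> E \<and> (x', z') \<in> W' \<and> match G R W \<sigma> W'))"

definition Estar :: "'a set set \<Rightarrow> 'a set set" where
  "Estar E = (\<Union>W \<in> E. Pow W)"

definition Succ :: "('x, 'e) aut \<Rightarrow> ('z, 'e) aut \<Rightarrow> 'e \<Rightarrow> ('x \<times> 'z) set \<Rightarrow> ('x \<times> 'z) set" where
  "Succ G R \<sigma> W = (\<Union>(x, z) \<in> W. {x'. (x, \<sigma>, x') \<in> trans G} \<times> {z'. (z, \<sigma>, z') \<in> trans R})"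

definition autE :: "('x, 'e) aut \<Rightarrow> ('z, 'e) aut \<Rightarrow> ('x \<times> 'z) set set \<Rightarrow> (('x \<times> 'z) set, 'e) aut" where
  "autE G R E = \<lparr>
     trans = {(W, \<sigma>, W'). W \<in> Estar E \<and> W' \<in> Estar E \<and>
               (\<exists>x z x' z'. (x, z) \<in> W \<and> (x', z') \<in> W' \<and> (x, \<sigma>, x') \<in> trans G \<and> (z, \<sigma>, z') \<in> trans R) \<and>
               match G R W \<sigma> W' \<and> W' \<subseteq> Succ G R \<sigma> W},
     init = {W0 \<in> Estar E. (\<forall>x0 \<in> init G. \<exists>z0 \<in> init R. (x0, z0) \<in> W0) \<and> W0 \<subseteq> init G \<times> init R} \<rparr>"

definition theta :: "('y, 'e) aut \<Rightarrow> ('x, 'e) aut \<Rightarrow> (('y \<times> 'x) \<times> 'z) set \<Rightarrow> 'y \<Rightarrow> ('x \<times> 'z) set" where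
  "theta S G \<Phi> y = {(x, z). ((y, x), z) \<in> \<Phi> \<and> (y, x) \<in> reach (sync S G)}"

definition EPhi :: "('y, 'e) aut \<Rightarrow> ('x, 'e) aut \<Rightarrow> (('y \<times> 'x) \<times> 'z) set \<Rightarrow> ('x \<times> 'z) set set" where
  "EPhi S G \<Phi> = range (theta S G \<Phi>)"

end

theory Submission
  imports Defs
begin

lemma sync_trans[simp]: "(((y,x),\<sigma>,(y',x')) \<in> trans (sync S G)) = ((y,\<sigma>,y') \<in> trans S \<and> (x,\<sigma>,x') \<in> trans G)"
  by (simp add: sync_def)

lemma sync_init[simp]: "init (sync S G) = init S \<times> init G"
  by (simp add: sync_def)

lemma reach_init: "q \<in> init A \<Longrightarrow> q \<in> reach A"
  by (auto simp: reach_def)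

lemma reach_step: "q \<in> reach A \<Longrightarrow> (q,\<sigma>,q') \<in> trans A \<Longrightarrow> q' \<in> reach A"
  unfolding reach_def step_rel_def
  by (auto intro: rtrancl_into_rtrancl)

lemma reach_sync_step: "(y,x) \<in> reach (sync S G) \<Longrightarrow> (y,\<sigma>,y') \<in> trans S \<Longrightarrow> (x,\<sigma>,x') \<in> trans G
  \<Longrightarrow> (y',x') \<in> reach (sync S G)"
  by (rule reach_step[where \<sigma>=\<sigma>]) auto

lemma main_part:
  assumes isS: "is_aut S" and adm: "admissible Euc S G"
    and cc: "is_ccsim Sr (sync S G) R \<Phi>"
  shows "ctrl_set Euc Sr G R (EPhi S G \<Phi>) \<and> sim (sync S G) (sync (autE G R (EPhi S G \<Phi>)) G)"
proof -
  let ?th = "theta S G \<Phi>"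
  let ?E = "EPhi S G \<Phi>"
  have simI: "\<And>q0. q0 \<in> init (sync S G) \<Longrightarrow> \<exists>p0 \<in> init R. (q0, p0) \<in> \<Phi>"
    using cc unfolding is_ccsim_def is_sim_def by blast
  have simF: "\<And>q p \<sigma> q'. (q, p) \<in> \<Phi> \<Longrightarrow> (q, \<sigma>, q') \<in> trans (sync S G) \<Longrightarrow>
        (\<exists>p'. (p, \<sigma>, p') \<in> trans R \<and> (q', p') \<in> \<Phi>)"
    using cc unfolding is_ccsim_def is_sim_def by blast
  have simB: "\<And>q p \<sigma> p'. (q, p) \<in> \<Phi> \<Longrightarrow> \<sigma> \<in> Sr \<Longrightarrow> (p, \<sigma>, p') \<in> trans R \<Longrightarrow>
        (\<exists>q'. (q, \<sigma>, q') \<in> trans (sync S G) \<and> (q', p') \<in> \<Phi>)"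
    using cc unfolding is_ccsim_def by blast
  have thE: "?th y \<in> ?E" for y by (simp add: EPhi_def)
  have th_iff: "(x,z) \<in> ?th y \<longleftrightarrow> ((y,x),z) \<in> \<Phi> \<and> (y,x) \<in> reach (sync S G)" for x z y
    by (simp add: theta_def)
  have key: "match G R (?th y) \<sigma> (?th y')" if "(y,\<sigma>,y') \<in> trans S" for y \<sigma> y'
    unfolding match_def
  proof (intro allI impI)
    fix x z x' assume a: "(x, z) \<in> ?th y \<and> (x, \<sigma>, x') \<in> trans G"
    hence r: "(y,x) \<in> reach (sync S G)" and p: "((y,x),z) \<in> \<Phi>" by (auto simp: th_iff)
    have t: "((y,x),\<sigma>,(y',x')) \<in> trans (sync S G)" using a that by simp
    obtain z' where "(z,\<sigma>,z') \<in> trans R" "((y',x'),z') \<in> \<Phi>" using simF[OF p t] by blast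
    moreover have "(y',x') \<in> reach (sync S G)" using reach_step[OF r t] .
    ultimately show "\<exists>z'. (z, \<sigma>, z') \<in> trans R \<and> (x', z') \<in> ?th y'" by (auto simp: th_iff)
  qed
  have ctrl: "ctrl_set Euc Sr G R ?E"
    unfolding ctrl_set_def
  proof (intro conjI ballI allI impI)
    obtain y0 where y0: "y0 \<in> init S" using isS unfolding is_aut_def by blast
    have "\<forall>x0 \<in> init G. \<exists>z0 \<in> init R. (x0, z0) \<in> ?th y0"
    proof
      fix x0 assume "x0 \<in> init G"
      hence i: "(y0,x0) \<in> init (sync S G)" using y0 by simp
      then obtain z0 where "z0 \<in> init R" "((y0,x0),z0) \<in> \<Phi>" using simI by blast
      thus "\<exists>z0 \<in> init R. (x0, z0) \<in> ?th y0" using reach_init[OF i] by (auto simp: th_iff)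
    qed
    thus "\<exists>W0\<in>?E. \<forall>x0\<in>init G. \<exists>z0\<in>init R. (x0, z0) \<in> W0" using thE by blast
  next
    fix W \<sigma> assume W: "W \<in> ?E" and s: "\<sigma> \<in> Euc"
    then obtain y where Wy: "W = ?th y" by (auto simp: EPhi_def)
    show "\<exists>W'\<in>?E. match G R W \<sigma> W'"
    proof (cases "\<exists>y'. (y,\<sigma>,y') \<in> trans S")
      case True
      then obtain y' where "(y,\<sigma>,y') \<in> trans S" by blast
      thus ?thesis using key thE Wy by blast
    next
      case False
      have "match G R W \<sigma> W"
        unfolding match_def
      proof (intro allI impI)
        fix x z x' assume a: "(x, z) \<in> W \<and> (x, \<sigma>, x') \<in> trans G"
        hence r: "(y,x) \<in> reach (sync S G)" using Wy by (auto simp: th_iff)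
        then obtain q' where "((y, x), \<sigma>, q') \<in> trans (sync S G)"
          using adm s a unfolding admissible_def by blast
        then obtain y2 x2 where "((y, x), \<sigma>, (y2,x2)) \<in> trans (sync S G)" by (cases q') auto
        hence "(y,\<sigma>,y2) \<in> trans S" by simp
        with False show "\<exists>z'. (z, \<sigma>, z') \<in> trans R \<and> (x', z') \<in> W" by blast
      qed
      thus ?thesis using W by blast
    qed
  next
    fix W x z \<sigma> z'
    assume W: "W \<in> ?E" and a: "(x, z) \<in> W \<and> \<sigma> \<in> Sr \<and> (z, \<sigma>, z') \<in> trans R"
    then obtain y where Wy: "W = ?th y" by (auto simp: EPhi_def)
    hence p: "((y,x),z) \<in> \<Phi>" and r: "(y,x) \<in> reach (sync S G)" using a by (auto simp: th_iff)
    obtain q' where q': "((y,x),\<sigma>,q') \<in> trans (sync S G)" "(q',z') \<in> \<Phi>" using simB[OF p] a by blast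
    obtain y' x' where qq: "q' = (y',x')" by (cases q')
    have t1: "(y,\<sigma>,y') \<in> trans S" and t2: "(x,\<sigma>,x') \<in> trans G" using q' qq by auto
    have "(x',z') \<in> ?th y'" using q' qq reach_step[OF r q'(1)] by (auto simp: th_iff)
    thus "\<exists>x' W'. (x, \<sigma>, x') \<in> trans G \<and> W' \<in> ?E \<and> (x', z') \<in> W' \<and> match G R W \<sigma> W'"
      using t2 thE key[OF t1] Wy by blast
  qed
  define Rel where "Rel = {((y,x),(W,x)) | y x W. (y,x) \<in> reach (sync S G) \<and> W \<subseteq> ?th y \<and> (\<exists>z. (x,z) \<in> W)}"
  have "is_sim (sync S G) (sync (autE G R ?E) G) Rel"
    unfolding is_sim_def
  proof (intro conjI ballI allI impI)
    fix q0 assume q0: "q0 \<in> init (sync S G)"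
    then obtain y0 x0 where qq: "q0 = (y0,x0)" "y0 \<in> init S" "x0 \<in> init G" by auto
    define W0 where "W0 = ?th y0 \<inter> (init G \<times> init R)"
    have I0: "\<forall>x0 \<in> init G. \<exists>z0 \<in> init R. (x0, z0) \<in> W0"
    proof
      fix x1 assume "x1 \<in> init G"
      hence i: "(y0,x1) \<in> init (sync S G)" using qq by simp
      then obtain z0 where "z0 \<in> init R" "((y0,x1),z0) \<in> \<Phi>" using simI by blast
      thus "\<exists>z0 \<in> init R. (x1, z0) \<in> W0" using reach_init[OF i] \<open>x1 \<in> init G\<close>
        by (auto simp: th_iff W0_def)
    qed
    have "W0 \<in> Estar ?E" unfolding Estar_def W0_def using thE by blast
    hence "W0 \<in> init (autE G R ?E)" using I0 by (auto simp: autE_def W0_def)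
    moreover have "(q0, (W0,x0)) \<in> Rel"
      using I0 qq reach_init[OF q0] unfolding Rel_def W0_def by auto
    ultimately show "\<exists>p0\<in>init (sync (autE G R ?E) G). (q0, p0) \<in> Rel" using qq by auto
  next
    fix q p \<sigma> q'
    assume a: "(q, p) \<in> Rel \<and> (q, \<sigma>, q') \<in> trans (sync S G)"
    then obtain y x W where qp: "q = (y,x)" "p = (W,x)" "(y,x) \<in> reach (sync S G)"
      "W \<subseteq> ?th y" and "\<exists>z. (x,z) \<in> W" unfolding Rel_def by blast
    then obtain z where xz: "(x,z) \<in> W" by blast
    obtain y' x' where qq: "q' = (y',x')" by (cases q')
    have t: "((y,x),\<sigma>,(y',x')) \<in> trans (sync S G)" using a qp qq by simp
    hence t1: "(y,\<sigma>,y') \<in> trans S" and t2: "(x,\<sigma>,x') \<in> trans G" by auto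
    define W' where "W' = ?th y' \<inter> Succ G R \<sigma> W"
    have m: "match G R W \<sigma> W'"
      unfolding match_def
    proof (intro allI impI)
      fix x1 z1 x1' assume b: "(x1, z1) \<in> W \<and> (x1, \<sigma>, x1') \<in> trans G"
      hence "(x1,z1) \<in> ?th y" using qp(4) by blast
      then obtain z1' where c: "(z1, \<sigma>, z1') \<in> trans R" "(x1', z1') \<in> ?th y'"
        using key[OF t1] b unfolding match_def by blast
      have "(x1', z1') \<in> Succ G R \<sigma> W" unfolding Succ_def using b c(1) by blast
      thus "\<exists>z'. (z1, \<sigma>, z') \<in> trans R \<and> (x1', z') \<in> W'" using c unfolding W'_def by blast
    qed
    obtain z' where z': "(z,\<sigma>,z') \<in> trans R" "(x',z') \<in> W'" using m xz t2 unfolding match_def by blast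
    have WE: "W \<in> Estar ?E" unfolding Estar_def using thE qp(4) by blast
    have WE': "W' \<in> Estar ?E" unfolding Estar_def W'_def using thE by blast
    have sub: "W' \<subseteq> Succ G R \<sigma> W" unfolding W'_def by blast
    have ex: "\<exists>x z x' z'. (x, z) \<in> W \<and> (x', z') \<in> W' \<and> (x, \<sigma>, x') \<in> trans G \<and> (z, \<sigma>, z') \<in> trans R"
      using xz z' t2 by blast
    have "(W,\<sigma>,W') \<in> trans (autE G R ?E)"
      unfolding autE_def using WE WE' m ex sub by simp
    hence "(p, \<sigma>, (W',x')) \<in> trans (sync (autE G R ?E) G)" using qp t2 by simp
    moreover have "(q', (W',x')) \<in> Rel"
    proof -
      have "W' \<subseteq> ?th y'" unfolding W'_def by blast
      thus ?thesis unfolding Rel_def using qq reach_step[OF qp(3) t] z'(2) by blast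
    qed
    ultimately show "\<exists>p'. (p, \<sigma>, p') \<in> trans (sync (autE G R ?E) G) \<and> (q', p') \<in> Rel" by blast
  qed
  thus ?thesis using ctrl unfolding sim_def by blast
qed

theorem lemma8:
  fixes G :: "('x, 'e::finite) aut" and R :: "('z, 'e) aut" and S :: "('y, 'e) aut"
    and Euc Sr :: "'e set"
  assumes "is_aut G" and "is_aut R"
    and "S \<in> SPR Euc Sr G R"
  shows "(\<exists>E. ctrl_set Euc Sr G R E \<and> sim (sync S G) (sync (autE G R E) G)) \<and>
         (\<forall>\<Phi>. is_ccsim Sr (sync S G) R \<Phi> \<longrightarrow>
            ctrl_set Euc Sr G R (EPhi S G \<Phi>) \<and>
            sim (sync S G) (sync (autE G R (EPhi S G \<Phi>)) G))"
proof -
  have S: "is_aut S" "admissible Euc S G" "ccsim Sr (sync S G) R"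
    using assms(3) by (auto simp: SPR_def)
  have all: "\<forall>\<Phi>. is_ccsim Sr (sync S G) R \<Phi> \<longrightarrow>
            ctrl_set Euc Sr G R (EPhi S G \<Phi>) \<and>
            sim (sync S G) (sync (autE G R (EPhi S G \<Phi>)) G)"
    using main_part[OF S(1,2)] by blast
  obtain \<Phi> where "is_ccsim Sr (sync S G) R \<Phi>" using S(3) unfolding ccsim_def by blast
  thus ?thesis using all by blast
qed

end
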